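(* Let $\varphi=\nu\tilde n.\sigma$ be a frame well-formed with respect to $\mathtt{s}\in\tilde n$ such that $\varphi\nvdash\mathtt{s}$. Let $U$, $V$ and $M$ be terms public with respect to $\varphi$, with all variables of $U$ and of $V$ in $\mathrm{dom}(\sigma)$ and $M$ ground. Then $U\sigma[\mathtt{s}/M]=V\sigma[\mathtt{s}/M]$ (syntactic equality) implies $U\sigma=V\sigma$.
   Context: Terms over $\Sigma=\{\mathsf{enc}/3,\mathsf{dec}/2,\mathsf{enca}/3,\mathsf{deca}/2,\mathsf{pub}/1,\mathsf{priv}/1,\langle\cdot,\cdot\rangle/2,\pi_1/1,\pi_2/1,\mathsf{sign}/2,\mathsf{check}/3,\mathsf{retrieve}/1\}$, constants (including $\mathsf{ok}$), names and variables; destructors are $\pi_1,\pi_2,\mathsf{dec},\mathsf{deca},\mathsf{check},\mathsf{retrieve}$. Equational theory $E$: $\pi_i(\langle z_1,z_2\rangle)=z_i$, $\mathsf{dec}(\mathsf{enc}(z_1,z_2,z_3),z_2)=z_1$, $\mathsf{deca}(\mathsf{enca}(z_1,\mathsf{pub}(z_2),z_3),\mathsf{priv}(z_2))=z_1$, $\mathsf{check}(z_1,\mathsf{sign}(z_1,\mathsf{priv}(z_2)),\mathsf{pub}(z_2))=\mathsf{ok}$, $\mathsf{retrieve}(\mathsf{sign}(z_1,z_2))=z_1$. Positions of terms are sequences of positive integers, $T|_p$ the subterm at $p$. A frame $\varphi=\nu\tilde n.\sigma$: finite set of restricted names $\tilde n$ and acyclic substitution $\sigma$. Public term w.r.t.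 $\varphi$: no name of $\tilde n$ and no $\mathsf{priv}$. $\varphi\vdash M$: least relation containing $x\sigma$ for $x\in\mathrm{dom}(\sigma)$ and names outside $\tilde n$, closed under application of symbols other than $\mathsf{priv}$ and under $=_E$. $T[\mathtt{s}/M]$ replaces each occurrence of the name $\mathtt{s}$ by $M$. An encryption occurrence $q$ in $U$ (head of $U|_q$ in $\{\mathsf{enc},\mathsf{enca}\}$) is an agent encryption w.r.t. names $\tilde m$ if $U|_{q\cdot3}\in\tilde m$, and a probabilistic encryption w.r.t. a set of terms $S$ if for all $V\in S$ and $p$ with $V|_p=U|_{q\cdot3}$ we have $p=q'\cdot3$ with $V|_{q'}=U|_q$. $\varphi$ is well-formed w.r.t. $\mathtt{s}$ if (1) every encryption in $\sigma$ is an agent encryption w.r.t. $\tilde n\setminus\{\mathtt{s}\}$ and a probabilistic encryption w.r.t. $\mathrm{ran}(\sigma)$; (2) for all subterms $\mathsf{enc}(M,K,R)$, $\mathsf{enca}(M',K',R')$, $\mathsf{sign}(U,V)$, $\mathsf{pub}(W)$, $\mathsf{priv}(W')$ of $\varphi$, $\mathtt{s}$ does not occur in $K,K',V,W,W',R,R'$; (3) $\varphi$ contains no destructor. *)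

theory Defs
  imports Main
begin

datatype fsym = Enc | Dec | Enca | Deca | Pub | Priv | Pair | Pi1 | Pi2 | Sign | Check | Retrieve

fun arity :: "fsym \<Rightarrow> nat" where
  "arity Enc = 3" | "arity Dec = 2" | "arity Enca = 3" | "arity Deca = 2"
| "arity Pub = 1" | "arity Priv = 1" | "arity Pair = 2" | "arity Pi1 = 1"
| "arity Pi2 = 1" | "arity Sign = 2" | "arity Check = 3" | "arity Retrieve = 1"

definition destructors :: "fsym set" where
  "destructors = {Pi1, Pi2, Dec, Deca, Check, Retrieve}"

datatype "term" = Var nat | Nm nat | Cst string | Fn fsym "term list"

definition ok :: "term" where "ok = Cst ''ok''"

fun wf_term :: "term \<Rightarrow> bool" where
  "wf_term (Fn f ts) = (length ts = arity f \<and> (\<forall>t\<in>set ts. wf_term t))"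
| "wf_term _ = True"

fun vars :: "term \<Rightarrow> nat set" where
  "vars (Var x) = {x}"
| "vars (Fn f ts) = (\<Union>t\<in>set ts. vars t)"
| "vars _ = {}"

definition ground :: "term \<Rightarrow> bool" where "ground t \<longleftrightarrow> vars t = {}"

section \<open>Positions (1-based argument indices)\<close>

inductive at_pos :: "term \<Rightarrow> nat list \<Rightarrow> term \<Rightarrow> bool" where
  at_root: "at_pos t [] t"
| at_arg: "i < length ts \<Longrightarrow> at_pos (ts ! i) p u \<Longrightarrow> at_pos (Fn f ts) (Suc i # p) u"

definition subterms :: "term \<Rightarrow> term set" where
  "subterms t = {u. \<exists>p. at_pos t p u}"

definition occurs_name :: "nat \<Rightarrow> term \<Rightarrow> bool" where
  "occurs_name n t \<longleftrightarrow> Nm n \<in> subterms t"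

fun head :: "term \<Rightarrow> fsym option" where
  "head (Fn f ts) = Some f"
| "head _ = None"

inductive eqE :: "term \<Rightarrow> term \<Rightarrow> bool" (infix "=\<^sub>E" 50) where
  E_refl: "t =\<^sub>E t"
| E_sym: "t =\<^sub>E u \<Longrightarrow> u =\<^sub>E t"
| E_trans: "t =\<^sub>E u \<Longrightarrow> u =\<^sub>E v \<Longrightarrow> t =\<^sub>E v"
| E_cong: "t =\<^sub>E u \<Longrightarrow> Fn f (xs @ t # ys) =\<^sub>E Fn f (xs @ u # ys)"
| E_pi1: "Fn Pi1 [Fn Pair [z1, z2]] =\<^sub>E z1"
| E_pi2: "Fn Pi2 [Fn Pair [z1, z2]] =\<^sub>E z2"
| E_dec: "Fn Dec [Fn Enc [z1, z2, z3], z2] =\<^sub>E z1"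
| E_deca: "Fn Deca [Fn Enca [z1, Fn Pub [z2], z3], Fn Priv [z2]] =\<^sub>E z1"
| E_check: "Fn Check [z1, Fn Sign [z1, Fn Priv [z2]], Fn Pub [z2]] =\<^sub>E ok"
| E_retrieve: "Fn Retrieve [Fn Sign [z1, z2]] =\<^sub>E z1"

type_synonym subst = "nat \<Rightarrow> term option"

fun subst1 :: "subst \<Rightarrow> term \<Rightarrow> term" where
  "subst1 \<sigma> (Var x) = (case \<sigma> x of Some t \<Rightarrow> t | None \<Rightarrow> Var x)"
| "subst1 \<sigma> (Fn f ts) = Fn f (map (subst1 \<sigma>) ts)"
| "subst1 \<sigma> t = t"

definition subst_dep :: "subst \<Rightarrow> (nat \<times> nat) set" where
  "subst_dep \<sigma> = {(x, y). x \<in> dom \<sigma> \<and> y \<in> vars (the (\<sigma> x))}"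

text \<open>Application of an acyclic substitution: iterate until all domain variables are
  eliminated; for an acyclic substitution, card (dom \<sigma>) iterations suffice.\<close>
definition app_subst :: "term \<Rightarrow> subst \<Rightarrow> term" (infixl "\<cdot>" 60) where
  "t \<cdot> \<sigma> = (subst1 \<sigma> ^^ card (dom \<sigma>)) t"

definition is_frame :: "nat set \<Rightarrow> subst \<Rightarrow> bool" where
  "is_frame ns \<sigma> \<longleftrightarrow> finite ns \<and> finite (dom \<sigma>) \<and> acyclic (subst_dep \<sigma>)
     \<and> (\<forall>t\<in>ran \<sigma>. wf_term t)"

definition frame_subterms :: "subst \<Rightarrow> term set" where
  "frame_subterms \<sigma> = (\<Union>t\<in>ran \<sigma>. subterms t)"

definition public :: "nat set \<Rightarrow> term \<Rightarrow> bool" where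
  "public ns t \<longleftrightarrow> (\<forall>n\<in>ns. \<not> occurs_name n t) \<and> (\<forall>u\<in>subterms t. head u \<noteq> Some Priv)"

inductive deducible :: "nat set \<Rightarrow> subst \<Rightarrow> term \<Rightarrow> bool" where
  ded_var: "x \<in> dom \<sigma> \<Longrightarrow> deducible ns \<sigma> (Var x \<cdot> \<sigma>)"
| ded_name: "n \<notin> ns \<Longrightarrow> deducible ns \<sigma> (Nm n)"
| ded_const: "deducible ns \<sigma> (Cst c)"
| ded_fun: "f \<noteq> Priv \<Longrightarrow> length ts = arity f \<Longrightarrow> (\<forall>t\<in>set ts. deducible ns \<sigma> t)
     \<Longrightarrow> deducible ns \<sigma> (Fn f ts)"
| ded_eq: "deducible ns \<sigma> t \<Longrightarrow> t =\<^sub>E u \<Longrightarrow> deducible ns \<sigma> u"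

fun replace_name :: "term \<Rightarrow> nat \<Rightarrow> term \<Rightarrow> term" where
  "replace_name (Nm n) s M = (if n = s then M else Nm n)"
| "replace_name (Fn f ts) s M = Fn f (map (\<lambda>t. replace_name t s M) ts)"
| "replace_name t s M = t"

definition is_encryption_at :: "term \<Rightarrow> nat list \<Rightarrow> bool" where
  "is_encryption_at U q \<longleftrightarrow> (\<exists>u. at_pos U q u \<and> head u \<in> {Some Enc, Some Enca})"

definition agent_encryption :: "nat set \<Rightarrow> term \<Rightarrow> nat list \<Rightarrow> bool" where
  "agent_encryption ms U q \<longleftrightarrow> (\<exists>m\<in>ms. at_pos U (q @ [3]) (Nm m))"

definition probabilistic_encryption :: "term set \<Rightarrow> term \<Rightarrow> nat list \<Rightarrow> bool" where
  "probabilistic_encryption S U q \<longleftrightarrow>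
     (\<forall>R Uq. at_pos U (q @ [3]) R \<longrightarrow> at_pos U q Uq \<longrightarrow>
        (\<forall>V\<in>S. \<forall>p. at_pos V p R \<longrightarrow> (\<exists>q'. p = q' @ [3] \<and> at_pos V q' Uq)))"

definition well_formed_frame :: "nat set \<Rightarrow> subst \<Rightarrow> nat \<Rightarrow> bool" where
  "well_formed_frame ns \<sigma> s \<longleftrightarrow>
     (\<forall>U\<in>ran \<sigma>. \<forall>q. is_encryption_at U q \<longrightarrow>
        agent_encryption (ns - {s}) U q \<and> probabilistic_encryption (ran \<sigma>) U q)
   \<and> (\<forall>u\<in>frame_subterms \<sigma>.
        (\<forall>M K R. u = Fn Enc [M, K, R] \<longrightarrow> \<not> occurs_name s K \<and> \<not> occurs_name s R)
      \<and> (\<forall>M K R. u = Fn Enca [M, K, R] \<longrightarrow> \<not> occurs_name s K \<and> \<not> occurs_name s R)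
      \<and> (\<forall>U V. u = Fn Sign [U, V] \<longrightarrow> \<not> occurs_name s V)
      \<and> (\<forall>W. u = Fn Pub [W] \<longrightarrow> \<not> occurs_name s W)
      \<and> (\<forall>W. u = Fn Priv [W] \<longrightarrow> \<not> occurs_name s W))
   \<and> (\<forall>u\<in>frame_subterms \<sigma>. \<forall>f. head u = Some f \<longrightarrow> f \<notin> destructors)"

end

theory Submission
  imports Defs
begin


inductive_cases at_pos_NilE: "at_pos t [] u"
inductive_cases at_pos_ConsE: "at_pos t (i # p) u"

lemma at_pos_det: "at_pos t p u \<Longrightarrow> at_pos t p v \<Longrightarrow> u = v"
proof (induction arbitrary: v rule: at_pos.induct)
  case (at_root t) then show ?case by (auto elim: at_pos_NilE)
next
  case (at_arg i ts p u f)
  from at_arg.prems show ?case by (auto elim!: at_pos_ConsE intro: at_arg.IH)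
qed

lemma at_pos_append: "at_pos t q u \<Longrightarrow> at_pos u p v \<Longrightarrow> at_pos t (q@p) v"
  by (induction rule: at_pos.induct) (auto intro: at_pos.intros)

lemma at_pos_split: "at_pos t (q@p) v \<Longrightarrow> \<exists>u. at_pos t q u \<and> at_pos u p v"
proof (induction q arbitrary: t)
  case Nil then show ?case by (auto intro: at_pos.intros)
next
  case (Cons i q)
  from Cons.prems show ?case
    by (auto elim!: at_pos_ConsE dest!: Cons.IH intro: at_pos.intros)
qed

lemma at_pos_wf: "at_pos t p u \<Longrightarrow> wf_term t \<Longrightarrow> wf_term u"
  by (induction rule: at_pos.induct) auto

lemma subterms_arg: "i < length ws \<Longrightarrow> u \<in> subterms (ws!i) \<Longrightarrow> u \<in> subterms (Fn f ws)"
  unfolding subterms_def by (auto intro: at_pos.intros)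

lemma subterms_self: "t \<in> subterms t"
  unfolding subterms_def by (auto intro: at_pos.intros)

lemma subterms_arg': "w \<in> set ws \<Longrightarrow> subterms w \<subseteq> subterms (Fn f ws)"
proof -
  assume "w \<in> set ws"
  then obtain i where "i < length ws" "w = ws ! i" by (auto simp: in_set_conv_nth)
  then show ?thesis using subterms_arg by blast
qed

lemma occurs_arg: "\<not> occurs_name n (Fn f ws) \<Longrightarrow> w \<in> set ws \<Longrightarrow> \<not> occurs_name n w"
  unfolding occurs_name_def using subterms_arg' by blast

lemma public_arg: "public ns (Fn f ws) \<Longrightarrow> w \<in> set ws \<Longrightarrow> public ns w"
  unfolding public_def occurs_name_def using subterms_arg' by blast

lemma subterms_trans: "u \<in> subterms t \<Longrightarrow> v \<in> subterms u \<Longrightarrow> v \<in> subterms t"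
  unfolding subterms_def using at_pos_append by blast

lemma frame_arg: "Fn f ws \<in> frame_subterms \<sigma> \<Longrightarrow> w \<in> set ws \<Longrightarrow> w \<in> frame_subterms \<sigma>"
proof -
  assume a: "Fn f ws \<in> frame_subterms \<sigma>" "w \<in> set ws"
  then obtain U where "U \<in> ran \<sigma>" "Fn f ws \<in> subterms U" unfolding frame_subterms_def by blast
  moreover have "w \<in> subterms (Fn f ws)" using subterms_arg' subterms_self a(2) by blast
  ultimately show ?thesis unfolding frame_subterms_def using subterms_trans by blast
qed

lemma frame_ran: "v \<in> ran \<sigma> \<Longrightarrow> v \<in> frame_subterms \<sigma>"
  unfolding frame_subterms_def using subterms_self by blast

lemma finite_vars: "finite (vars t)"
  by (induction t) auto

lemma vars_subst1: "y \<in> vars (subst1 \<sigma> t) \<Longrightarrow>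
   \<exists>x\<in>vars t. (x \<in> dom \<sigma> \<and> y \<in> vars (the (\<sigma> x))) \<or> (x \<notin> dom \<sigma> \<and> y = x)"
proof (induction \<sigma> t rule: subst1.induct)
  case (2 \<sigma> f ts)
  then obtain u where "u \<in> set ts" "y \<in> vars (subst1 \<sigma> u)" by auto
  with 2 show ?case by force
qed (auto split: option.splits)

lemma subst1_id: "vars t \<inter> dom \<sigma> = {} \<Longrightarrow> subst1 \<sigma> t = t"
  by (induction \<sigma> t rule: subst1.induct) (auto split: option.splits intro: map_idI)

lemma iter_Fn: "(subst1 \<sigma> ^^ k) (Fn f ts) = Fn f (map (subst1 \<sigma> ^^ k) ts)"
  by (induction k) auto

lemma iter_fix: "subst1 \<sigma> t = t \<Longrightarrow> (subst1 \<sigma> ^^ k) t = t"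
  by (induction k) auto

lemma vars_iter: "y \<in> vars ((subst1 \<sigma> ^^ k) t) \<Longrightarrow> y \<in> dom \<sigma> \<Longrightarrow>
   \<exists>x\<in>vars t. (x, y) \<in> subst_dep \<sigma> ^^ k"
proof (induction k arbitrary: y)
  case 0 then show ?case by auto
next
  case (Suc k)
  from Suc.prems(1) have "y \<in> vars (subst1 \<sigma> ((subst1 \<sigma> ^^ k) t))" by simp
  from vars_subst1[OF this] Suc.prems(2) obtain x where
    x: "x \<in> vars ((subst1 \<sigma> ^^ k) t)" "x \<in> dom \<sigma>" "y \<in> vars (the (\<sigma> x))" by auto
  from Suc.IH[OF x(1,2)] obtain z where "z \<in> vars t" "(z, x) \<in> subst_dep \<sigma> ^^ k" by blast
  moreover have "(x, y) \<in> subst_dep \<sigma>" using x unfolding subst_dep_def by auto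
  ultimately show ?case by auto
qed

lemma chain_bound:
  assumes fin: "finite (dom \<sigma>)" and ac: "acyclic (subst_dep \<sigma>)"
    and xy: "(x, y) \<in> subst_dep \<sigma> ^^ card (dom \<sigma>)" and yd: "y \<in> dom \<sigma>"
  shows False
proof -
  define n where "n = card (dom \<sigma>)"
  from xy obtain g where g: "g 0 = x" "g n = y" "\<forall>i<n. (g i, g (Suc i)) \<in> subst_dep \<sigma>"
    unfolding relpow_fun_conv n_def by blast
  have gd: "g ` {0..n} \<subseteq> dom \<sigma>"
  proof
    fix z assume "z \<in> g ` {0..n}"
    then obtain i where i: "i \<le> n" "z = g i" by auto
    show "z \<in> dom \<sigma>"
    proof (cases "i < n")
      case True with g(3) i show ?thesis unfolding subst_dep_def by auto
    next
      case False with i g(2) yd show ?thesis by auto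
    qed
  qed
  have "\<not> inj_on g {0..n}"
  proof
    assume "inj_on g {0..n}"
    then have "card (g ` {0..n}) = n + 1" by (simp add: card_image)
    moreover have "card (g ` {0..n}) \<le> n" using card_mono[OF fin gd] n_def by simp
    ultimately show False by simp
  qed
  then obtain i j where ij: "i \<le> n" "j \<le> n" "i < j" "g i = g j"
    unfolding inj_on_def by (metis atLeastAtMost_iff linorder_neqE_nat)
  have path: "\<And>d. i + d \<le> n \<Longrightarrow> (g i, g (i + d)) \<in> subst_dep \<sigma> ^^ d"
  proof -
    fix d show "i + d \<le> n \<Longrightarrow> (g i, g (i + d)) \<in> subst_dep \<sigma> ^^ d"
    proof (induction d)
      case 0 then show ?case by simp
    next
      case (Suc d)
      then have "(g i, g (i + d)) \<in> subst_dep \<sigma> ^^ d" by simp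
      moreover have "(g (i+d), g (Suc (i + d))) \<in> subst_dep \<sigma>" using g(3) Suc.prems by auto
      ultimately show ?case by auto
    qed
  qed
  from path[of "j - i"] ij have "(g i, g j) \<in> subst_dep \<sigma> ^^ (j - i)" by simp
  with ij have "(g i, g i) \<in> (subst_dep \<sigma>)\<^sup>+" unfolding trancl_power
    by (intro exI[of _ "j - i"]) simp
  with ac show False unfolding acyclic_def by simp
qed

context
  fixes \<sigma> :: subst
  assumes fin: "finite (dom \<sigma>)" and ac: "acyclic (subst_dep \<sigma>)"
begin

lemma norm_vars: "y \<in> vars (t \<cdot> \<sigma>) \<Longrightarrow> y \<notin> dom \<sigma>"
proof
  assume "y \<in> vars (t \<cdot> \<sigma>)" "y \<in> dom \<sigma>"
  then obtain x where "(x, y) \<in> subst_dep \<sigma> ^^ card (dom \<sigma>)"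
    unfolding app_subst_def using vars_iter by blast
  with chain_bound[OF fin ac] \<open>y \<in> dom \<sigma>\<close> show False by blast
qed

lemma norm_fix: "subst1 \<sigma> (t \<cdot> \<sigma>) = t \<cdot> \<sigma>"
  using norm_vars by (intro subst1_id) auto

lemma N_Fn: "Fn f ts \<cdot> \<sigma> = Fn f (map (\<lambda>t. t \<cdot> \<sigma>) ts)"
  unfolding app_subst_def by (simp add: iter_Fn)

lemma N_Nm: "Nm n \<cdot> \<sigma> = Nm n"
  unfolding app_subst_def by (simp add: iter_fix)

lemma N_Cst: "Cst c \<cdot> \<sigma> = Cst c"
  unfolding app_subst_def by (simp add: iter_fix)

lemma N_Var_out: "x \<notin> dom \<sigma> \<Longrightarrow> Var x \<cdot> \<sigma> = Var x"
  unfolding app_subst_def by (rule iter_fix) (auto split: option.splits)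

lemma N_Var_in: "x \<in> dom \<sigma> \<Longrightarrow> Var x \<cdot> \<sigma> = the (\<sigma> x) \<cdot> \<sigma>"
proof -
  assume x: "x \<in> dom \<sigma>"
  let ?f = "subst1 \<sigma>" and ?n = "card (dom \<sigma>)"
  have "(?f ^^ Suc ?n) (Var x) = (?f ^^ ?n) (?f (Var x))"
    by (simp only: funpow_Suc_right comp_def)
  also have "?f (Var x) = the (\<sigma> x)" using x by auto
  finally have a: "(?f ^^ Suc ?n) (Var x) = the (\<sigma> x) \<cdot> \<sigma>" unfolding app_subst_def .
  have "(?f ^^ Suc ?n) (Var x) = ?f (Var x \<cdot> \<sigma>)" unfolding app_subst_def by simp
  with norm_fix a show ?thesis by simp
qed

end



definition pubT :: "nat set \<Rightarrow> subst \<Rightarrow> term \<Rightarrow> bool" where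
  "pubT ns \<sigma> W \<longleftrightarrow> wf_term W \<and> public ns W \<and> vars W \<subseteq> dom \<sigma>"

definition Good :: "nat set \<Rightarrow> subst \<Rightarrow> nat \<Rightarrow> term \<Rightarrow> bool" where
  "Good ns \<sigma> s t \<longleftrightarrow> (\<exists>W. pubT ns \<sigma> W \<and> t = W \<cdot> \<sigma>)
     \<or> (\<exists>u. u \<in> frame_subterms \<sigma> \<and> t = u \<cdot> \<sigma> \<and> (deducible ns \<sigma> t \<or> \<not> occurs_name s u))"

lemma pubT_arg: "pubT ns \<sigma> (Fn f ws) \<Longrightarrow> w \<in> set ws \<Longrightarrow> pubT ns \<sigma> w"
  unfolding pubT_def using public_arg by auto

lemma rep_atom: "replace_name t s M = Nm r \<Longrightarrow> t \<noteq> Nm s \<Longrightarrow> t = Nm r"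
  by (cases t) (auto split: if_splits)

lemma rep_Fn: "replace_name t s M = Fn f xs \<Longrightarrow> t \<noteq> Nm s \<Longrightarrow>
   \<exists>ts. t = Fn f ts \<and> xs = map (\<lambda>t. replace_name t s M) ts"
  by (cases t) (auto split: if_splits)

lemma rep_nonFn: "\<forall>f ts. t \<noteq> Fn f ts \<Longrightarrow> t \<noteq> Nm s \<Longrightarrow> replace_name t s M = t"
  by (cases t) auto

context
  fixes ns \<sigma> s
  assumes fr: "is_frame ns \<sigma>" and wff: "well_formed_frame ns \<sigma> s"
    and nd: "\<not> deducible ns \<sigma> (Nm s)"
begin

lemma fin: "finite (dom \<sigma>)" and ac: "acyclic (subst_dep \<sigma>)" and wfran: "\<forall>t\<in>ran \<sigma>. wf_term t"
  using fr unfolding is_frame_def by auto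

lemmas N_Fn' = N_Fn[OF fin ac] and N_Nm' = N_Nm[OF fin ac] and N_Cst' = N_Cst[OF fin ac]
  and N_Var_out' = N_Var_out[OF fin ac] and N_Var_in' = N_Var_in[OF fin ac]

lemma frame_wf: "u \<in> frame_subterms \<sigma> \<Longrightarrow> wf_term u"
  unfolding frame_subterms_def subterms_def using wfran at_pos_wf by blast

lemma fin_dep: "finite (subst_dep \<sigma>)"
proof -
  have "subst_dep \<sigma> \<subseteq> dom \<sigma> \<times> (\<Union>t\<in>ran \<sigma>. vars t)"
    unfolding subst_dep_def by (auto intro: ranI)
  moreover have "finite (dom \<sigma> \<times> (\<Union>t\<in>ran \<sigma>. vars t))"
    using fin finite_ran finite_vars by blast
  ultimately show ?thesis by (rule finite_subset)
qed

lemma Nvar: "y \<in> dom \<sigma> \<Longrightarrow> (\<exists>z. Var y \<cdot> \<sigma> = Var z)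
   \<or> (\<exists>v\<in>ran \<sigma>. (\<forall>z. v \<noteq> Var z) \<and> Var y \<cdot> \<sigma> = v \<cdot> \<sigma>)"
proof (induction y rule: wf_induct_rule[OF finite_acyclic_wf_converse[OF fin_dep ac]])
  case (1 y)
  then obtain v where v: "\<sigma> y = Some v" by auto
  then have N: "Var y \<cdot> \<sigma> = v \<cdot> \<sigma>" using N_Var_in' 1(2) by simp
  show ?case
  proof (cases "\<exists>z. v = Var z")
    case True
    then obtain z where z: "v = Var z" by auto
    show ?thesis
    proof (cases "z \<in> dom \<sigma>")
      case True
      have "(y, z) \<in> subst_dep \<sigma>" using v z 1(2) unfolding subst_dep_def by auto
      then have "(z, y) \<in> (subst_dep \<sigma>)\<inverse>" by simp
      from 1(1)[OF this True] N z show ?thesis by simp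
    next
      case False
      then show ?thesis using N z N_Var_out' by simp
    qed
  next
    case False
    then show ?thesis using N v by (auto intro: ranI)
  qed
qed

lemma pub_ded: "pubT ns \<sigma> W \<Longrightarrow> deducible ns \<sigma> (W \<cdot> \<sigma>)"
proof (induction W)
  case (Var x)
  then have "x \<in> dom \<sigma>" unfolding pubT_def by simp
  then show ?case by (rule ded_var)
next
  case (Nm n)
  then have "n \<notin> ns" unfolding pubT_def public_def occurs_name_def using subterms_self by blast
  then show ?case by (simp add: N_Nm' ded_name)
next
  case (Cst c) then show ?case by (simp add: N_Cst' ded_const)
next
  case (Fn f ws)
  have "f \<noteq> Priv" using Fn.prems subterms_self unfolding pubT_def public_def by fastforce
  moreover have "length (map (\<lambda>t. t \<cdot> \<sigma>) ws) = arity f" using Fn.prems unfolding pubT_def by simp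
  moreover have "\<forall>t\<in>set (map (\<lambda>t. t \<cdot> \<sigma>) ws). deducible ns \<sigma> t"
    using Fn.IH pubT_arg[OF Fn.prems] by auto
  ultimately show ?case by (simp add: N_Fn' ded_fun)
qed

lemma var_Fn: "x \<in> dom \<sigma> \<Longrightarrow> Var x \<cdot> \<sigma> = Fn f ts \<Longrightarrow>
  \<exists>ws. ts = map (\<lambda>t. t \<cdot> \<sigma>) ws \<and> Fn f ws \<in> frame_subterms \<sigma> \<and> deducible ns \<sigma> (Fn f ts)"
proof -
  assume x: "x \<in> dom \<sigma>" and e: "Var x \<cdot> \<sigma> = Fn f ts"
  have d: "deducible ns \<sigma> (Fn f ts)" using ded_var[OF x, of ns] e by simp
  from Nvar[OF x] e obtain v where v: "v \<in> ran \<sigma>" "\<forall>z. v \<noteq> Var z" "Fn f ts = v \<cdot> \<sigma>"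
    by (auto simp: N_Var_out')
  then show ?thesis using d frame_ran[OF v(1)]
    by (cases v) (auto simp: N_Fn' N_Nm' N_Cst')
qed

lemma good_not_s: "Good ns \<sigma> s t \<Longrightarrow> t \<noteq> Nm s"
proof
  assume g: "Good ns \<sigma> s t" and ts: "t = Nm s"
  from g consider (p) W where "pubT ns \<sigma> W" "t = W \<cdot> \<sigma>"
    | (fc) u where "u \<in> frame_subterms \<sigma>" "t = u \<cdot> \<sigma>" "deducible ns \<sigma> t \<or> \<not> occurs_name s u"
    unfolding Good_def by blast
  then show False
  proof cases
    case p
    then show False using pub_ded nd ts by auto
  next
    case fc
    note u = fc
    show False
    proof (cases u)
      case (Var x)
      show False
      proof (cases "x \<in> dom \<sigma>")
        case True
        then show False using ded_var[OF True, of ns] u(2) ts Var nd by simp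
      next
        case False then show False using u(2) ts Var N_Var_out' by simp
      qed
    next
      case (Nm n)
      then show False using u ts nd subterms_self unfolding occurs_name_def by (auto simp: N_Nm')
    qed (use u ts in \<open>auto simp: N_Fn' N_Cst'\<close>)
  qed
qed

lemma good_Fn: "Good ns \<sigma> s (Fn f ts) \<Longrightarrow>
   (\<exists>ws. ts = map (\<lambda>t. t \<cdot> \<sigma>) ws \<and> pubT ns \<sigma> (Fn f ws))
 \<or> (\<exists>ws. ts = map (\<lambda>t. t \<cdot> \<sigma>) ws \<and> Fn f ws \<in> frame_subterms \<sigma>
        \<and> (deducible ns \<sigma> (Fn f ts) \<or> \<not> occurs_name s (Fn f ws)))"
proof -
  assume "Good ns \<sigma> s (Fn f ts)"
  then consider (p) W where "pubT ns \<sigma> W" "Fn f ts = W \<cdot> \<sigma>"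
    | (fc) u where "u \<in> frame_subterms \<sigma>" "Fn f ts = u \<cdot> \<sigma>"
      "deducible ns \<sigma> (Fn f ts) \<or> \<not> occurs_name s u"
    unfolding Good_def by blast
  then show ?thesis
  proof cases
    case p
    note W = p
    show ?thesis
    proof (cases W)
      case (Var x)
      then have "x \<in> dom \<sigma>" using W unfolding pubT_def by simp
      then obtain ws where "ts = map (\<lambda>t. t \<cdot> \<sigma>) ws" "Fn f ws \<in> frame_subterms \<sigma>"
        "deducible ns \<sigma> (Fn f ts)" using var_Fn W Var by metis
      then show ?thesis by blast
    qed (use W in \<open>auto simp: N_Fn' N_Cst' N_Nm'\<close>)
  next
    case fc
    note u = fc
    show ?thesis
    proof (cases u)
      case (Var x)
      show ?thesis
      proof (cases "x \<in> dom \<sigma>")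
        case True
        then obtain ws where "ts = map (\<lambda>t. t \<cdot> \<sigma>) ws" "Fn f ws \<in> frame_subterms \<sigma>"
          "deducible ns \<sigma> (Fn f ts)" using var_Fn u Var by metis
        then show ?thesis by blast
      next
        case False then show ?thesis using u Var N_Var_out' by simp
      qed
    qed (use u in \<open>auto simp: N_Fn' N_Cst' N_Nm'\<close>)
  qed
qed

end


lemma at_pos_single: "at_pos (Fn f ws) [Suc i] v \<longleftrightarrow> i < length ws \<and> v = ws!i"
  by (auto elim!: at_pos_ConsE at_pos_NilE intro: at_pos.intros)

lemma at_pos_3: "at_pos (Fn f ws) [3] v \<longleftrightarrow> 2 < length ws \<and> v = ws!2"
proof -
  have "(3::nat) = Suc 2" by simp
  then show ?thesis using at_pos_single[of f ws 2 v] by simp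
qed

lemma ded_pi1: "deducible ns \<sigma> (Fn Pair [a, b]) \<Longrightarrow> deducible ns \<sigma> a"
  by (rule ded_eq[OF ded_fun[of Pi1 "[Fn Pair [a, b]]"] E_pi1]) auto

lemma ded_pi2: "deducible ns \<sigma> (Fn Pair [a, b]) \<Longrightarrow> deducible ns \<sigma> b"
  by (rule ded_eq[OF ded_fun[of Pi2 "[Fn Pair [a, b]]"] E_pi2]) auto

lemma ded_retr: "deducible ns \<sigma> (Fn Sign [a, b]) \<Longrightarrow> deducible ns \<sigma> a"
  by (rule ded_eq[OF ded_fun[of Retrieve "[Fn Sign [a, b]]"] E_retrieve]) auto

lemma len2: "length ws = 2 \<Longrightarrow> \<exists>a b. ws = [a, b]"
  by (cases ws; cases "tl ws"; auto)

lemma len1: "length ws = 1 \<Longrightarrow> \<exists>a. ws = [a]"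
  by (cases ws; auto)

context
  fixes ns \<sigma> s
  assumes fr: "is_frame ns \<sigma>" and wff: "well_formed_frame ns \<sigma> s"
    and nd: "\<not> deducible ns \<sigma> (Nm s)"
begin

lemmas N_Fn'' = N_Fn'[OF fr wff nd] and N_Nm'' = N_Nm'[OF fr wff nd]
  and frame_wf' = frame_wf[OF fr wff nd] and pub_ded' = pub_ded[OF fr wff nd]
  and Nvar' = Nvar[OF fr wff nd] and N_Var_out'' = N_Var_out'[OF fr wff nd]
  and N_Cst'' = N_Cst'[OF fr wff nd]

lemmas wf1 = conjunct1[OF wff[unfolded well_formed_frame_def]]
lemmas wf2 = conjunct1[OF conjunct2[OF wff[unfolded well_formed_frame_def]]]
lemmas wf3 = conjunct2[OF conjunct2[OF wff[unfolded well_formed_frame_def]]]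

lemma comps_pub: "ts = map (\<lambda>t. t \<cdot> \<sigma>) ws \<Longrightarrow> pubT ns \<sigma> (Fn f ws) \<Longrightarrow> \<forall>x\<in>set ts. Good ns \<sigma> s x"
  apply (rule ballI) subgoal premises P for x
proof -
  from P obtain w where "w \<in> set ws" "x = w \<cdot> \<sigma>" "pubT ns \<sigma> (Fn f ws)" by auto
  then show "Good ns \<sigma> s x" unfolding Good_def using pubT_arg by blast
qed
  done

lemma comps_frame:
  assumes ts: "ts = map (\<lambda>t. t \<cdot> \<sigma>) ws" and fs: "Fn f ws \<in> frame_subterms \<sigma>"
    and dd: "deducible ns \<sigma> (Fn f ts) \<or> \<not> occurs_name s (Fn f ws)"
    and ne: "f \<noteq> Enc" "f \<noteq> Enca"
  shows "\<forall>x\<in>set ts. Good ns \<sigma> s x"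
proof
  fix x assume "x \<in> set ts"
  then obtain w where w: "w \<in> set ws" "x = w \<cdot> \<sigma>" using ts by auto
  have wfr: "w \<in> frame_subterms \<sigma>" using frame_arg[OF fs w(1)] .
  have "deducible ns \<sigma> x \<or> \<not> occurs_name s w"
  proof (cases "occurs_name s (Fn f ws)")
    case False then show ?thesis using occurs_arg w(1) by blast
  next
    case True
    with dd have d: "deducible ns \<sigma> (Fn f ts)" by simp
    have len: "length ws = arity f" using frame_wf'[OF fs] by simp
    have nd: "f \<notin> destructors" using wf3 fs by auto
    have w2: "\<forall>U V. Fn f ws = Fn Sign [U, V] \<longrightarrow> \<not> occurs_name s V"
      "\<forall>W. Fn f ws = Fn Pub [W] \<longrightarrow> \<not> occurs_name s W"
      "\<forall>W. Fn f ws = Fn Priv [W] \<longrightarrow> \<not> occurs_name s W"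
      using wf2 fs by blast+
    show ?thesis
    proof (cases f)
      case Pair
      with len have "length ws = 2" by simp
      then obtain a b where ab: "ws = [a, b]" using len2 by blast
      with d ts Pair have dd': "deducible ns \<sigma> (Fn Pair [a \<cdot> \<sigma>, b \<cdot> \<sigma>])" by simp
      from ab w(1) have "w = a \<or> w = b" by simp
      then show ?thesis using ded_pi1[OF dd'] ded_pi2[OF dd'] w(2) by blast
    next
      case Sign
      with len have "length ws = 2" by simp
      then obtain a b where ab: "ws = [a, b]" using len2 by blast
      with d ts Sign have dd': "deducible ns \<sigma> (Fn Sign [a \<cdot> \<sigma>, b \<cdot> \<sigma>])" by simp
      from ab w(1) have "w = a \<or> w = b" by simp
      moreover have "\<not> occurs_name s b" using w2(1) ab Sign by simp
      ultimately show ?thesis using ded_retr[OF dd'] w(2) by blast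
    next
      case Pub
      with len have "length ws = 1" by simp
      then obtain a where "ws = [a]" using len1 by blast
      with w w2(2) Pub show ?thesis by simp
    next
      case Priv
      with len have "length ws = 1" by simp
      then obtain a where "ws = [a]" using len1 by blast
      with w w2(3) Priv show ?thesis by simp
    qed (use ne nd in \<open>auto simp: destructors_def\<close>)
  qed
  then show "Good ns \<sigma> s x" unfolding Good_def using wfr w(2) by blast
qed

lemma enc_frame:
  assumes fs: "Fn f ws \<in> frame_subterms \<sigma>" and fe: "f = Enc \<or> f = Enca"
  shows "\<exists>U q r. U \<in> ran \<sigma> \<and> at_pos U q (Fn f ws) \<and> r \<in> ns \<and> r \<noteq> s \<and> length ws = 3
     \<and> ws!2 = Nm r \<and> probabilistic_encryption (ran \<sigma>) U q"
proof -
  obtain U q where U: "U \<in> ran \<sigma>" "at_pos U q (Fn f ws)"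
    using fs unfolding frame_subterms_def subterms_def by blast
  have "is_encryption_at U q" unfolding is_encryption_at_def using U(2) fe by auto
  with wf1 U(1) have ag: "agent_encryption (ns - {s}) U q" and pr: "probabilistic_encryption (ran \<sigma>) U q"
    by blast+
  from ag obtain m where m: "m \<in> ns" "m \<noteq> s" "at_pos U (q @ [3]) (Nm m)"
    unfolding agent_encryption_def by blast
  from at_pos_split[OF m(3)] obtain u' where "at_pos U q u'" "at_pos u' [3] (Nm m)" by blast
  with at_pos_det U(2) have "at_pos (Fn f ws) [3] (Nm m)" by metis
  then have "ws!2 = Nm m" by (simp add: at_pos_3)
  moreover have "length ws = 3" using frame_wf'[OF fs] fe by auto
  ultimately show ?thesis using U m pr by blast
qed

lemma enc_unique:
  assumes fs1: "Fn f ws1 \<in> frame_subterms \<sigma>" and fs2: "Fn f ws2 \<in> frame_subterms \<sigma>"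
    and fe: "f = Enc \<or> f = Enca"
    and eq: "replace_name (ws1!2 \<cdot> \<sigma>) s M = replace_name (ws2!2 \<cdot> \<sigma>) s M"
  shows "ws1 = ws2"
proof -
  obtain U1 q1 r1 where A: "U1 \<in> ran \<sigma>" "at_pos U1 q1 (Fn f ws1)" "r1 \<in> ns" "r1 \<noteq> s" "length ws1 = 3"
     "ws1!2 = Nm r1" "probabilistic_encryption (ran \<sigma>) U1 q1"
    using enc_frame[OF fs1 fe] by blast
  obtain U2 q2 r2 where B: "U2 \<in> ran \<sigma>" "at_pos U2 q2 (Fn f ws2)" "r2 \<in> ns" "r2 \<noteq> s" "length ws2 = 3"
     "ws2!2 = Nm r2" "probabilistic_encryption (ran \<sigma>) U2 q2"
    using enc_frame[OF fs2 fe] by blast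
  from eq A B have r: "r1 = r2" by (simp add: N_Nm'')
  have a1: "at_pos U1 (q1 @ [3]) (Nm r1)"
    using at_pos_append[OF A(2)] A(5,6) by (simp add: at_pos_3)
  have a2: "at_pos U2 (q2 @ [3]) (Nm r1)"
    using at_pos_append[OF B(2)] B(5,6) r by (simp add: at_pos_3)
  from A(7) a1 A(2) B(1) a2 obtain q' where "q2 @ [3] = q' @ [3]" "at_pos U2 q' (Fn f ws1)"
    unfolding probabilistic_encryption_def by blast
  then have "at_pos U2 q2 (Fn f ws1)" by simp
  from at_pos_det[OF this B(2)] show ?thesis by simp
qed

lemma enc_mixed:
  assumes fs1: "Fn f ws1 \<in> frame_subterms \<sigma>" and fe: "f = Enc \<or> f = Enca"
    and p2: "pubT ns \<sigma> (Fn f ws2)"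
    and eq: "replace_name (ws2!2 \<cdot> \<sigma>) s M = replace_name (ws1!2 \<cdot> \<sigma>) s M"
  shows False
proof -
  obtain U1 q1 r where A: "U1 \<in> ran \<sigma>" "at_pos U1 q1 (Fn f ws1)" "r \<in> ns" "r \<noteq> s" "length ws1 = 3"
     "ws1!2 = Nm r" "probabilistic_encryption (ran \<sigma>) U1 q1"
    using enc_frame[OF fs1 fe] by blast
  have l2: "length ws2 = 3" using p2 fe unfolding pubT_def by auto
  then have W3: "pubT ns \<sigma> (ws2!2)" using pubT_arg[OF p2] by simp
  have "ws2!2 \<cdot> \<sigma> \<noteq> Nm s" using pub_ded'[OF W3] nd by auto
  moreover have "replace_name (ws2!2 \<cdot> \<sigma>) s M = Nm r" using eq A(4,6) by (simp add: N_Nm'')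
  ultimately have e: "ws2!2 \<cdot> \<sigma> = Nm r" using rep_atom by blast
  have a1: "at_pos U1 (q1 @ [3]) (Nm r)"
    using at_pos_append[OF A(2)] A(5,6) by (simp add: at_pos_3)
  show False
  proof (cases "ws2!2")
    case (Var y)
    then have y: "y \<in> dom \<sigma>" using W3 unfolding pubT_def by simp
    from Nvar'[OF y] e Var obtain v where v: "v \<in> ran \<sigma>" "\<forall>z. v \<noteq> Var z" "v \<cdot> \<sigma> = Nm r"
      by auto
    then have "v = Nm r" by (cases v) (auto simp: N_Fn'' N_Nm'' N_Cst'')
    with v(1) have "Nm r \<in> ran \<sigma>" by simp
    moreover have "at_pos (Nm r) [] (Nm r)" by (rule at_root)
    ultimately obtain q' where "[] = q' @ [3]"
      using A(7) a1 A(2) unfolding probabilistic_encryption_def by blast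
    then show False by simp
  next
    case (Nm n)
    then have "n = r" using e by (simp add: N_Nm'')
    then show False using W3 Nm A(3) subterms_self unfolding pubT_def public_def occurs_name_def by auto
  qed (use e in \<open>auto simp: N_Fn'' N_Cst''\<close>)
qed

lemma atom_case: "\<forall>f ts. t1 \<noteq> Fn f ts \<Longrightarrow> t1 \<noteq> Nm s \<Longrightarrow> t2 \<noteq> Nm s \<Longrightarrow>
    replace_name t1 s M = replace_name t2 s M \<Longrightarrow> t1 = t2"
  by (cases t1; cases t2; auto split: if_splits)

lemma main: "Good ns \<sigma> s t1 \<Longrightarrow> Good ns \<sigma> s t2 \<Longrightarrow>
    replace_name t1 s M = replace_name t2 s M \<Longrightarrow> t1 = t2"
proof (induction t1 arbitrary: t2)
  case (Fn f ts1)
  have n1: "Fn f ts1 \<noteq> Nm s" and n2: "t2 \<noteq> Nm s" using good_not_s[OF fr wff nd] Fn.prems by blast+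
  from Fn.prems(3) rep_Fn[OF _ n2] obtain ts2 where t2: "t2 = Fn f ts2"
    and meq: "map (\<lambda>t. replace_name t s M) ts1 = map (\<lambda>t. replace_name t s M) ts2"
    by (metis replace_name.simps(2))
  have len: "length ts1 = length ts2" using meq by (metis length_map)
  have nth: "\<And>i. i < length ts1 \<Longrightarrow> replace_name (ts1!i) s M = replace_name (ts2!i) s M"
    using meq len by (metis nth_map)
  have gen: "ts1 = ts2" if g1: "\<forall>x\<in>set ts1. Good ns \<sigma> s x" and g2: "\<forall>x\<in>set ts2. Good ns \<sigma> s x"
  proof (rule nth_equalityI[OF len])
    fix i assume i: "i < length ts1"
    show "ts1!i = ts2!i"
      using Fn.IH[OF nth_mem[OF i]] g1 g2 nth_mem[OF i] nth_mem[of i ts2] i len nth[OF i] by auto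
  qed
  have G1: "Good ns \<sigma> s (Fn f ts1)" and G2: "Good ns \<sigma> s (Fn f ts2)" using Fn.prems t2 by auto
  note D1 = good_Fn[OF fr wff nd G1] and D2 = good_Fn[OF fr wff nd G2]
  show ?case
  proof (cases "f = Enc \<or> f = Enca")
    case False
    have "\<forall>x\<in>set ts1. Good ns \<sigma> s x" using D1 comps_pub comps_frame False by blast
    moreover have "\<forall>x\<in>set ts2. Good ns \<sigma> s x" using D2 comps_pub comps_frame False by blast
    ultimately show ?thesis using gen t2 by simp
  next
    case fe: True
    from D1 consider (p1) ws1 where "ts1 = map (\<lambda>t. t \<cdot> \<sigma>) ws1" "pubT ns \<sigma> (Fn f ws1)"
      | (f1) ws1 where "ts1 = map (\<lambda>t. t \<cdot> \<sigma>) ws1" "Fn f ws1 \<in> frame_subterms \<sigma>" by blast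
    then show ?thesis
    proof cases
      case p1
      note a1 = p1
      from D2 consider (p2) ws2 where "ts2 = map (\<lambda>t. t \<cdot> \<sigma>) ws2" "pubT ns \<sigma> (Fn f ws2)"
        | (f2) ws2 where "ts2 = map (\<lambda>t. t \<cdot> \<sigma>) ws2" "Fn f ws2 \<in> frame_subterms \<sigma>" by blast
      then show ?thesis
      proof cases
        case p2
        note a2 = p2
        show ?thesis using gen comps_pub[OF a1] comps_pub[OF a2] t2 by simp
      next
        case f2
        note a2 = f2
        have "length ws1 = 3" using a1(2) fe unfolding pubT_def by auto
        then have "replace_name (ws1!2 \<cdot> \<sigma>) s M = replace_name (ws2!2 \<cdot> \<sigma>) s M"
          using nth[of 2] a1 a2 len by simp
        from enc_mixed[OF a2(2) fe a1(2) this] show ?thesis ..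
      qed
    next
      case f1
      note a1 = f1
      have l1: "length ws1 = 3" using frame_wf'[OF a1(2)] fe by auto
      from D2 consider (p2) ws2 where "ts2 = map (\<lambda>t. t \<cdot> \<sigma>) ws2" "pubT ns \<sigma> (Fn f ws2)"
        | (f2) ws2 where "ts2 = map (\<lambda>t. t \<cdot> \<sigma>) ws2" "Fn f ws2 \<in> frame_subterms \<sigma>" by blast
      then show ?thesis
      proof cases
        case p2
        note a2 = p2
        have "replace_name (ws2!2 \<cdot> \<sigma>) s M = replace_name (ws1!2 \<cdot> \<sigma>) s M"
          using nth[of 2] a1 a2 len l1 by simp
        from enc_mixed[OF a1(2) fe a2(2) this] show ?thesis ..
      next
        case f2
        note a2 = f2
        have "replace_name (ws1!2 \<cdot> \<sigma>) s M = replace_name (ws2!2 \<cdot> \<sigma>) s M"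
          using nth[of 2] a1 a2 len l1 by simp
        from enc_unique[OF a1(2) a2(2) fe this] show ?thesis using a1 a2 t2 by simp
      qed
    qed
  qed
qed (use good_not_s[OF fr wff nd] atom_case in blast)+

end

theorem lemma2p7:
  fixes ns :: "nat set" and \<sigma> :: subst and s :: nat and U V M :: "term"
  assumes "is_frame ns \<sigma>"
    and "s \<in> ns"
    and "well_formed_frame ns \<sigma> s"
    and "\<not> deducible ns \<sigma> (Nm s)"
    and "wf_term U" and "wf_term V" and "wf_term M"
    and "public ns U" and "public ns V" and "public ns M"
    and "vars U \<subseteq> dom \<sigma>" and "vars V \<subseteq> dom \<sigma>"
    and "ground M"
    and "replace_name (U \<cdot> \<sigma>) s M = replace_name (V \<cdot> \<sigma>) s M"
  shows "U \<cdot> \<sigma> = V \<cdot> \<sigma>"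
proof -
  have "Good ns \<sigma> s (U \<cdot> \<sigma>)" unfolding Good_def pubT_def using assms by blast
  moreover have "Good ns \<sigma> s (V \<cdot> \<sigma>)" unfolding Good_def pubT_def using assms by blast
  ultimately show ?thesis using main[OF assms(1) assms(3) assms(4)] assms(14) by blast
qed

end
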